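(* Let $Q$ be a real-valued $\Gamma$-periodic potential on a $\Gamma$-periodic graph $\mathcal G$. (i) If $\sigma(A(0)+Q)=\sigma(A(0))$ and the fundamental graph $\mathcal G_*$ has no loops, then $Q\equiv0$. (ii) If $\sigma(A(0)+Q)=\sigma(A(0)-\varkappa)$, where $\varkappa$ is the degree potential $\varkappa(v)=\varkappa_v$, then $Q\equiv-\varkappa$.
   Context: Let $\Gamma$ be a lattice of rank $d$ in $\mathbb R^d$ with basis $\mathfrak a_1,\dots,\mathfrak a_d$ and fundamental cell $\Omega=\{\sum_s x_s\mathfrak a_s: x_s\in[0,1)\}$. A $\Gamma$-periodic graph $\mathcal G=(\mathcal V,\mathcal E)$ is a connected, locally finite graph embedded in $\mathbb R^d$, invariant under translation by $\Gamma$, with finite quotient; $\mathcal G$ has no loops, multiple edges are allowed. Edges are counted with both orientations ($\mathcal A$ the oriented edges). The fundamental graph $\mathcal G_*=(\mathcal V_*,\mathcal A_* )=\mathcal G/\Gamma$ (may have loops, multiple edges); $\varkappa_v$ is the number of oriented edges starting at $v$. Every vertex is uniquely $v=v_0+[v]$ with $v_0\in\Omega$, $[v]\in\Gamma$; for $\mathbf e=(u,v)$, $\tau(\mathbf e)=[v]_{\mathbb A}-[u]_{\mathbb A}\in\mathbb Z^d$ (coordinates in the basis), well defined on $\mathcal A_*$. A potential is $Q:\mathcal V_*\to\mathbb R$. $A(0)$ is the operator on $\ell^2(\mathcal V_* )$ with $(A(0)f)(v)=\sum_{\mathbf e=(v,u)\in\mathcal A_*}f(u)$ (more generally $A(k)$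 with factors $e^{i\langle\tau(\mathbf e),k\rangle}$); $Q$, $\varkappa$ act by multiplication. $\sigma(\cdot)$ is the spectrum (eigenvalues with multiplicities). *)

theory Defs
  imports "HOL-Analysis.Analysis" "HOL-Computational_Algebra.Polynomial"
begin

text \<open>Combinatorial model of a Gamma-periodic graph via its fundamental graph.
  Vertices of the fundamental graph form the finite type 'v; oriented edges are the
  finite set E :: 'e set with source src, target tgt, orientation reversal rv, and
  index tau :: 'e => ('d => int), where 'd is a finite type of cardinality d
  (coordinates with respect to the lattice basis). The periodic graph itself has
  vertex set 'v x Z^d, and the oriented edge e at shift n goes from (src e, n)
  to (tgt e, \<lambda>i. n i + tau e i).\<close>

definition lift_adj ::
  "'e set \<Rightarrow> ('e \<Rightarrow> 'v) \<Rightarrow> ('e \<Rightarrow> 'v) \<Rightarrow> ('e \<Rightarrow> ('d \<Rightarrow> int))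
   \<Rightarrow> (('v \<times> ('d \<Rightarrow> int)) \<times> ('v \<times> ('d \<Rightarrow> int))) set" where
  "lift_adj E src tgt tau =
     {((src e, n), (tgt e, \<lambda>i. n i + tau e i)) | e n. e \<in> E}"

definition periodic_graph ::
  "'e set \<Rightarrow> ('e \<Rightarrow> 'v::finite) \<Rightarrow> ('e \<Rightarrow> 'v) \<Rightarrow> ('e \<Rightarrow> 'e)
   \<Rightarrow> ('e \<Rightarrow> ('d::finite \<Rightarrow> int)) \<Rightarrow> bool" where
  "periodic_graph E src tgt rv tau \<longleftrightarrow>
     finite E \<and>
     (\<forall>e\<in>E. rv e \<in> E \<and> rv (rv e) = e \<and> rv e \<noteq> e \<and>
              src (rv e) = tgt e \<and> tgt (rv e) = src e \<and> (\<forall>i. tau (rv e) i = - tau e i)) \<and>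
     \<comment> \<open>the periodic graph has no loops\<close>
     (\<forall>e\<in>E. src e = tgt e \<longrightarrow> (\<exists>i. tau e i \<noteq> 0)) \<and>
     \<comment> \<open>the periodic graph is connected\<close>
     (\<forall>x y. (x, y) \<in> (lift_adj E src tgt tau)\<^sup>*)"

definition has_loop :: "'e set \<Rightarrow> ('e \<Rightarrow> 'v) \<Rightarrow> ('e \<Rightarrow> 'v) \<Rightarrow> bool" where
  "has_loop E src tgt \<longleftrightarrow> (\<exists>e\<in>E. src e = tgt e)"

text \<open>Matrix of A(0): number of oriented edges of the fundamental graph from v to u.\<close>
definition adj0 :: "'e set \<Rightarrow> ('e \<Rightarrow> 'v::finite) \<Rightarrow> ('e \<Rightarrow> 'v) \<Rightarrow> real^'v^'v" where
  "adj0 E src tgt = (\<chi> v u. real (card {e\<in>E. src e = v \<and> tgt e = u}))"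

definition degree :: "'e set \<Rightarrow> ('e \<Rightarrow> 'v) \<Rightarrow> 'v \<Rightarrow> real" where
  "degree E src v = real (card {e\<in>E. src e = v})"

definition mult_op :: "('v::finite \<Rightarrow> real) \<Rightarrow> real^'v^'v" where
  "mult_op Q = (\<chi> v u. if v = u then Q v else 0)"

definition charpoly :: "real^'n^'n \<Rightarrow> real poly" where
  "charpoly M = det (\<chi> i j. (if i = j then [:0, 1:] else 0) - [:M $ i $ j:])"

definition spectrum_mset :: "real^'n^'n \<Rightarrow> real multiset" where
  "spectrum_mset M = proots (charpoly M)"

end

theory Submission
  imports Defs "HOL-Computational_Algebra.Fundamental_Theorem_Algebra"
begin

lemma hom_sum:
  fixes f :: "'a::comm_ring_1 \<Rightarrow> 'b::comm_ring_1"
  assumes add: "\<And>x y. f (x+y) = f x + f y" and z: "f 0 = 0"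
  shows "f (sum g S) = sum (\<lambda>x. f (g x)) S"
  by (induction S rule: infinite_finite_induct) (auto simp: add z)

lemma hom_prod:
  fixes f :: "'a::comm_ring_1 \<Rightarrow> 'b::comm_ring_1"
  assumes mult: "\<And>x y. f (x*y) = f x * f y" and o: "f 1 = 1"
  shows "f (prod g S) = prod (\<lambda>x. f (g x)) S"
  by (induction S rule: infinite_finite_induct) (auto simp: mult o)

lemma ofr_mult: "map_poly (of_real::real\<Rightarrow>'a::{real_algebra_1,comm_ring_1}) (p*q) = map_poly of_real p * map_poly of_real q"
  by (intro poly_eqI) (simp add: coeff_map_poly coeff_mult)
lemma ofr_add: "map_poly (of_real::real\<Rightarrow>'a::{real_algebra_1,comm_ring_1}) (p+q) = map_poly of_real p + map_poly of_real q"
  by (intro poly_eqI) (simp add: coeff_map_poly)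
lemma ofr_diff: "map_poly (of_real::real\<Rightarrow>'a::{real_algebra_1,comm_ring_1}) (p-q) = map_poly of_real p - map_poly of_real q"
  by (intro poly_eqI) (simp add: coeff_map_poly)

lemma det_hom:
  fixes f :: "'a::comm_ring_1 \<Rightarrow> 'b::comm_ring_1"
  assumes add: "\<And>x y. f (x+y) = f x + f y" and mult: "\<And>x y. f (x*y) = f x * f y"
    and o: "f 1 = 1"
  shows "f (det (A::'a^'n^'n)) = det (\<chi> i j. f (A$i$j))"
proof -
  have z: "f 0 = 0" using add[of 0 0] by simp
  have neg: "f (-x) = - f x" for x using add[of x "-x"] z by (metis add.right_inverse neg_eq_iff_add_eq_0)
  have si: "f (of_int (sign p)) = of_int (sign p)" for p :: "'n \<Rightarrow> 'n"
    by (cases p rule: sign_cases) (simp_all add: o neg)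
  show ?thesis unfolding det_def
    by (simp add: hom_sum[of f, OF add z] hom_prod[of f, OF mult o] mult si)
qed

lemma poly_charpoly: "poly (charpoly M) t = det (mat t - M)"
proof -
  have "poly (charpoly M) t = det (\<chi> i j. poly ((if i = j then [:0, 1:] else 0) - [:M $ i $ j:]) t)"
    unfolding charpoly_def by (subst det_hom[where f="\<lambda>p. poly p t"]) auto
  also have "(\<chi> i j. poly ((if i = j then [:0, 1:] else 0) - [:M $ i $ j:]) t) = mat t - M"
    by (auto simp: vec_eq_iff mat_def)
  finally show ?thesis .
qed

lemma cpoly_charpoly: "poly (map_poly complex_of_real (charpoly M)) z
   = det (mat z - (\<chi> i j. complex_of_real (M$i$j)))"
proof -
  have "poly (map_poly complex_of_real (charpoly M)) z = det (\<chi> i j. poly (map_poly complex_of_real ((if i = j then [:0, 1:] else 0) - [:M $ i $ j:])) z)"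
    unfolding charpoly_def by (subst det_hom[where f="\<lambda>p. poly (map_poly complex_of_real p) z"]) (auto simp: ofr_mult ofr_add)
  also have "(\<chi> i j. poly (map_poly complex_of_real ((if i = j then [:0, 1:] else 0) - [:M $ i $ j:])) z) = mat z - (\<chi> i j. complex_of_real (M$i$j))"
    by (auto simp: vec_eq_iff mat_def ofr_diff map_poly_pCons)
  finally show ?thesis .
qed

lemma prod_lin:
  fixes a :: "'i \<Rightarrow> real"
  assumes "finite S"
  shows "Polynomial.degree (\<Prod>i\<in>S. [:-a i, 1:]) = card S \<and> coeff (\<Prod>i\<in>S. [:-a i, 1:]) (card S) = 1
     \<and> (S \<noteq> {} \<longrightarrow> coeff (\<Prod>i\<in>S. [:-a i, 1:]) (card S - 1) = - (\<Sum>i\<in>S. a i))"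
  using assms
proof (induction S rule: finite_induct)
  case empty
  then show ?case by simp
next
  case (insert x S)
  define P where "P = (\<Prod>i\<in>S. [:-a i, 1:])"
  have P0: "P \<noteq> 0" using insert by (auto simp: P_def)
  have eq: "(\<Prod>i\<in>insert x S. [:-a i, 1:]) = smult (- a x) P + pCons 0 P"
    using insert by (simp add: P_def)
  have c: "card (insert x S) = Suc (card S)" using insert by simp
  have d: "Polynomial.degree (\<Prod>i\<in>insert x S. [:-a i, 1:]) = Suc (card S)"
  proof -
    have e2: "(\<Prod>i\<in>insert x S. [:-a i, 1:]) = [:-a x,1:] * P" using insert by (simp add: P_def)
    have hP: "Polynomial.degree P = card S" using insert.IH by (simp add: P_def)
    show ?thesis unfolding e2 using P0 hP by (subst degree_mult_eq) auto
  qed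
  have hi: "coeff P (Suc (card S)) = 0" using insert by (simp add: P_def coeff_eq_0)
  show ?case
  proof (intro conjI impI)
    show "Polynomial.degree (\<Prod>i\<in>insert x S. [:-a i, 1:]) = card (insert x S)" using d c by simp
    show "coeff (\<Prod>i\<in>insert x S. [:-a i, 1:]) (card (insert x S)) = 1"
      unfolding eq c using insert hi by (simp add: P_def)
    show "coeff (\<Prod>i\<in>insert x S. [:-a i, 1:]) (card (insert x S) - 1) = - (\<Sum>i\<in>insert x S. a i)"
    proof (cases "S = {}")
      case True then show ?thesis unfolding eq c by (simp add: P_def)
    next
      case False
      then have "card S \<ge> 1" using insert by (simp add: Suc_leI card_gt_0_iff)
      then obtain m where m: "card S = Suc m" by (cases "card S") auto
      show ?thesis unfolding eq c using insert False m by (simp add: P_def)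
    qed
  qed
qed

lemma perm_fix_card:
  fixes p :: "'n::finite \<Rightarrow> 'n"
  assumes "p permutes UNIV" "p \<noteq> id"
  shows "card {i. p i = i} + 2 \<le> CARD('n)"
proof -
  obtain i where i: "p i \<noteq> i" using assms(2) by (auto simp: fun_eq_iff)
  define j where "j = p i"
  have inj: "inj p" using assms(1) permutes_inj by blast
  have j: "p j \<noteq> j"
  proof
    assume "p j = j"
    then have "p j = p i" by (simp add: j_def)
    then have "j = i" using inj by (simp add: inj_eq)
    then show False using i j_def by simp
  qed
  have ij: "i \<noteq> j" using i j_def by auto
  have sub: "{i, j} \<subseteq> UNIV - {i. p i = i}" using i j by auto
  have "card {i, j} \<le> card (UNIV - {i. p i = i})" by (rule card_mono[OF _ sub]) simp
  then have "2 \<le> card (UNIV - {i. p i = i})" using ij by simp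
  moreover have "card (UNIV - {i. p i = i}) = CARD('n) - card {i. p i = i}"
    by (simp add: card_Diff_subset)
  moreover have "card {i. p i = i} \<le> CARD('n)" by (simp add: card_mono)
  ultimately show ?thesis by linarith
qed

lemma charpoly_decomp:
  fixes M :: "real^'n::finite^'n"
  shows "\<exists>R. charpoly M = (\<Prod>i\<in>UNIV. [:-(M$i$i),1:]) + R \<and> (\<forall>k. CARD('n) \<le> Suc k \<longrightarrow> coeff R k = 0)"
proof -
  define C where "C = (\<chi> i j. (if i = j then [:0, 1:] else 0) - [:M $ i $ j:] :: real poly^'n^'n)"
  define P where "P = {p. p permutes (UNIV::'n set)}"
  define T where "T = (\<lambda>p. of_int (sign p) * (\<Prod>i\<in>UNIV. C $ i $ p i) :: real poly)"
  have fin: "finite P" unfolding P_def by (simp add: finite_permutations)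
  have idP: "id \<in> P" unfolding P_def by (simp add: permutes_id)
  have cp: "charpoly M = sum T P" unfolding charpoly_def det_def C_def T_def P_def by simp
  also have "\<dots> = T id + sum T (P - {id})" by (rule sum.remove[OF fin idP])
  also have "T id = (\<Prod>i\<in>UNIV. [:-(M$i$i),1:])" unfolding T_def C_def by simp
  finally have e: "charpoly M = (\<Prod>i\<in>UNIV. [:-(M$i$i),1:]) + sum T (P - {id})" .
  have z: "coeff (T p) k = 0" if p: "p \<in> P - {id}" and k: "CARD('n) \<le> Suc k" for p k
  proof -
    have "Polynomial.degree (T p) \<le> Polynomial.degree (of_int (sign p) :: real poly) + Polynomial.degree (\<Prod>i\<in>UNIV. C $ i $ p i)"
      unfolding T_def by (rule degree_mult_le)
    also have "\<dots> = Polynomial.degree (\<Prod>i\<in>UNIV. C $ i $ p i)" by simp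
    also have "\<dots> \<le> (\<Sum>i\<in>UNIV. Polynomial.degree (C $ i $ p i))" using degree_prod_sum_le[of UNIV "\<lambda>i. C $ i $ p i"] by (simp add: o_def)
    also have "\<dots> \<le> (\<Sum>i\<in>UNIV. (if p i = i then 1 else 0))"
      by (rule sum_mono) (auto simp: C_def)
    also have "\<dots> = card {i. p i = i}" by (simp add: sum.If_cases)
    finally have "Polynomial.degree (T p) \<le> card {i. p i = i}" .
    moreover have "card {i. p i = i} + 2 \<le> CARD('n)" using p by (intro perm_fix_card) (auto simp: P_def)
    ultimately have "Polynomial.degree (T p) < k" using k by linarith
    then show ?thesis by (simp add: coeff_eq_0)
  qed
  show ?thesis
    by (rule exI[of _ "sum T (P - {id})"]) (use e z in \<open>auto simp: coeff_sum\<close>)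
qed

lemma charpoly_props:
  fixes M :: "real^'n::finite^'n"
  shows "Polynomial.degree (charpoly M) = CARD('n)" "lead_coeff (charpoly M) = 1"
    "coeff (charpoly M) (CARD('n) - 1) = - trace M"
proof -
  obtain R where e: "charpoly M = (\<Prod>i\<in>UNIV. [:-(M$i$i),1:]) + R"
    and R: "\<And>k. CARD('n) \<le> Suc k \<Longrightarrow> coeff R k = 0"
    using charpoly_decomp[of M] by blast
  define D where "D = (\<Prod>i\<in>(UNIV::'n set). [:-(M$i$i),1:])"
  have D: "Polynomial.degree D = CARD('n)" "coeff D (CARD('n)) = 1"
     "coeff D (CARD('n) - 1) = - (\<Sum>i\<in>UNIV. M$i$i)"
    using prod_lin[of "UNIV::'n set" "\<lambda>i. M$i$i"] by (auto simp: D_def)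
  have ce: "coeff (charpoly M) k = coeff D k" if "CARD('n) \<le> Suc k" for k
    using R[OF that] by (simp add: e D_def)
  have c1: "coeff (charpoly M) (CARD('n)) = 1" using ce[of "CARD('n)"] D by simp
  have "Polynomial.degree (charpoly M) \<le> CARD('n)"
  proof (rule degree_le)
    show "\<forall>i>CARD('n). coeff (charpoly M) i = 0"
      using ce D(1) by (auto simp: coeff_eq_0)
  qed
  moreover have "CARD('n) \<le> Polynomial.degree (charpoly M)" using c1 by (intro le_degree) simp
  ultimately show dg: "Polynomial.degree (charpoly M) = CARD('n)" by simp
  show "lead_coeff (charpoly M) = 1" using dg c1 by simp
  have "CARD('n) \<le> Suc (CARD('n) - 1)" by simp
  then show "coeff (charpoly M) (CARD('n) - 1) = - trace M"
    using ce D(3) by (simp add: trace_def)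
qed

lemma poly_ofr: "poly (map_poly complex_of_real p) (of_real x) = of_real (poly p x)"
  by (induction p) (auto simp: map_poly_pCons)

lemma real_split:
  fixes p :: "real poly"
  assumes "p \<noteq> 0" "\<And>z::complex. poly (map_poly of_real p) z = 0 \<Longrightarrow> Im z = 0"
  shows "p = smult (lead_coeff p) (\<Prod>r\<in>#proots p. [:-r,1:])"
  using assms
proof (induction "Polynomial.degree p" arbitrary: p rule: less_induct)
  case less
  show ?case
  proof (cases "Polynomial.degree p = 0")
    case True
    then obtain c where "p = [:c:]" by (metis degree_eq_zeroE)
    then show ?thesis using less.prems by simp
  next
    case False
    define q where "q = map_poly complex_of_real p"
    have dq: "Polynomial.degree q = Polynomial.degree p" unfolding q_def by (rule degree_map_poly) simp
    have "\<not> (\<exists>a l. a \<noteq> 0 \<and> l = 0 \<and> q = pCons a l)" using dq False by auto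
    then obtain z where z: "poly q z = 0" using fundamental_theorem_of_algebra_alt by blast
    have "Im z = 0" using less.prems(2) z q_def by blast
    then have zr: "z = of_real (Re z)" by (simp add: complex_eq_iff)
    define r where "r = Re z"
    have "of_real (poly p r) = (0::complex)" using z zr poly_ofr[of p r] by (simp add: q_def r_def)
    then have "poly p r = 0" by simp
    then have "[:-r,1:] dvd p" by (simp add: poly_eq_0_iff_dvd)
    then obtain s where ps: "p = [:-r,1:] * s" by (elim dvdE)
    have s0: "s \<noteq> 0" using less.prems(1) ps by auto
    have ds: "Polynomial.degree p = Suc (Polynomial.degree s)" unfolding ps using s0 by (subst degree_mult_eq) auto
    have hs: "Im w = 0" if "poly (map_poly of_real s) w = 0" for w :: complex
    proof -
      have "poly (map_poly of_real p) w = poly (map_poly of_real [:-r,1:]) w * poly (map_poly of_real s) w"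
        unfolding ps ofr_mult by simp
      then show ?thesis using less.prems(2)[of w] that by simp
    qed
    have IH: "s = smult (lead_coeff s) (\<Prod>r\<in>#proots s. [:-r,1:])"
      using less.hyps[of s] ds s0 hs by simp
    have pr: "proots p = {#r#} + proots s" unfolding ps using s0 proots_linear_factor[of "-r"]
      by (subst proots_mult) auto
    have lc: "lead_coeff p = lead_coeff s" unfolding ps lead_coeff_mult by simp
    have "p = [:-r,1:] * smult (lead_coeff s) (\<Prod>r\<in>#proots s. [:-r,1:])" using ps IH by simp
    also have "\<dots> = smult (lead_coeff p) (\<Prod>r\<in>#proots p. [:-r,1:])" using pr lc by simp
    finally show ?thesis .
  qed
qed

lemma det0_ker:
  fixes B :: "'a::field^'n::finite^'n"
  assumes "det B = 0"
  shows "\<exists>x. x \<noteq> 0 \<and> B *v x = 0"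
proof -
  have "\<not> invertible B" using assms invertible_det_nz by blast
  then have "\<not> (\<exists>B'. B' ** B = mat 1)" using invertible_left_inverse by blast
  then show ?thesis using matrix_left_invertible_ker by blast
qed

lemma sym_real_roots:
  fixes M :: "real^'n::finite^'n"
  assumes sym: "\<And>i j. M$i$j = M$j$i"
    and z: "poly (map_poly complex_of_real (charpoly M)) z = 0"
  shows "Im z = 0"
proof -
  define MC where "MC = (\<chi> i j. complex_of_real (M$i$j))"
  have "det (mat z - MC) = 0" using z cpoly_charpoly[of M z] by (simp add: MC_def)
  then obtain x where x0: "x \<noteq> 0" and xk: "(mat z - MC) *v x = 0" using det0_ker by blast
  have ev: "(\<Sum>j\<in>UNIV. of_real (M$i$j) * x$j) = z * x$i" for i
  proof -
    have "((mat z - MC) *v x) $ i = 0" using xk by simp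
    then have h0: "(\<Sum>j\<in>UNIV. ((if i = j then z else 0) - of_real (M$i$j)) * x$j) = 0"
      by (simp add: matrix_vector_mult_def MC_def mat_def)
    have "(\<Sum>j\<in>UNIV. ((if i = j then z else 0) - of_real (M$i$j)) * x$j)
         = (\<Sum>j\<in>UNIV. (if i = j then z * x$j else 0) - of_real (M$i$j) * x$j)"
      by (rule sum.cong) (auto simp: left_diff_distrib)
    then have "(\<Sum>j\<in>UNIV. (if i = j then z * x$j else 0)) - (\<Sum>j\<in>UNIV. of_real (M$i$j) * x$j) = 0"
      using h0 by (simp only: sum_subtractf)
    then show ?thesis by simp
  qed
  define s where "s = (\<Sum>i\<in>UNIV. \<Sum>j\<in>UNIV. of_real (M$i$j) * cnj (x$i) * x$j)"
  have s1: "s = z * (\<Sum>i\<in>UNIV. cnj (x$i) * x$i)"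
  proof -
    have "s = (\<Sum>i\<in>UNIV. cnj (x$i) * (\<Sum>j\<in>UNIV. of_real (M$i$j) * x$j))"
      unfolding s_def by (simp add: sum_distrib_left mult_ac)
    also have "\<dots> = (\<Sum>i\<in>UNIV. z * (cnj (x$i) * x$i))"
      unfolding ev by (simp add: mult_ac)
    finally show ?thesis by (simp add: sum_distrib_left)
  qed
  have "cnj s = (\<Sum>i\<in>UNIV. \<Sum>j\<in>UNIV. of_real (M$i$j) * x$i * cnj (x$j))"
    unfolding s_def by (simp add: cnj_sum)
  also have "\<dots> = (\<Sum>j\<in>UNIV. \<Sum>i\<in>UNIV. of_real (M$i$j) * x$i * cnj (x$j))" by (rule sum.swap)
  also have "\<dots> = s" unfolding s_def using sym by (simp add: mult_ac)
  finally have "cnj s = s" .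
  then have ims: "Im s = 0" by (metis Reals_cnj_iff complex_is_Real_iff)
  define N where "N = (\<Sum>i\<in>UNIV. (cmod (x$i))^2)"
  have nn: "(\<Sum>i\<in>UNIV. cnj (x$i) * x$i) = of_real N"
    unfolding N_def of_real_sum by (rule sum.cong) (simp_all only: complex_norm_square of_real_power[symmetric] mult.commute)
  obtain k where "x$k \<noteq> 0" using x0 by (metis vec_eq_iff zero_index)
  then have "(cmod (x$k))^2 > 0" by simp
  moreover have "(cmod (x$k))^2 \<le> N" unfolding N_def
    by (rule member_le_sum) auto
  ultimately have "N > 0" by linarith
  have "Im s = Im z * N" using s1 nn by simp
  then show ?thesis using ims \<open>N > 0\<close> by simp
qed

lemma mat_sq_id:
  fixes M :: "real^'n::finite^'n"
  shows "(mat t - M) ** (mat t + M) = mat (t*t) - M ** M"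
proof -
  have "((mat t - M) ** (mat t + M))$i$j = (mat (t*t) - M ** M)$i$j" for i j
  proof -
    have "((mat t - M) ** (mat t + M))$i$j = (\<Sum>k\<in>UNIV. ((if i = k then t else 0) - M$i$k) * ((if k = j then t else 0) + M$k$j))"
      by (simp add: matrix_matrix_mult_def mat_def)
    also have "\<dots> = (\<Sum>k\<in>UNIV. (if i = k then t * (if k = j then t else 0) + t * M$k$j else 0)
        - (if k = j then M$i$k * t else 0) - M$i$k * M$k$j)"
      by (rule sum.cong) (auto simp: algebra_simps)
    also have "\<dots> = (if i = j then t*t else 0) + t * M$i$j - M$i$j * t - (\<Sum>k\<in>UNIV. M$i$k * M$k$j)"
      by (simp add: sum_subtractf sum.distrib)
    also have "\<dots> = (mat (t*t) - M ** M)$i$j"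
      by (simp add: matrix_matrix_mult_def mat_def)
    finally show ?thesis .
  qed
  then show ?thesis by (simp add: vec_eq_iff)
qed

lemma det_neg:
  fixes A :: "'a::comm_ring_1^'n::finite^'n"
  shows "det (- A) = (-1)^CARD('n) * det A"
proof -
  have "- A = (\<chi> i. (\<lambda>_. -1) i *s A$i)" by (simp add: vec_eq_iff)
  then have "det (- A) = prod (\<lambda>_. -1) (UNIV::'n set) * det (\<chi> i. A$i)"
    using det_rows_mul[of "\<lambda>_. -1" "\<lambda>i. A$i"] by simp
  then show ?thesis by simp
qed

lemma charpoly_sq_eval:
  fixes M :: "real^'n::finite^'n"
  shows "poly (charpoly (M ** M)) (t*t) = (-1)^CARD('n) * poly (charpoly M) t * poly (charpoly M) (-t)"
proof -
  have "poly (charpoly (M ** M)) (t*t) = det ((mat t - M) ** (mat t + M))"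
    by (simp add: poly_charpoly mat_sq_id)
  also have "\<dots> = det (mat t - M) * det (mat t + M)" by (rule det_mul)
  also have "mat t + M = - (mat (-t) - M)" by (simp add: vec_eq_iff mat_def)
  also have "det (- (mat (-t) - M)) = (-1)^CARD('n) * det (mat (-t) - M)" by (rule det_neg)
  finally show ?thesis by (simp add: poly_charpoly)
qed

lemma charpoly_sq_eq:
  fixes M N :: "real^'n::finite^'n"
  assumes "charpoly M = charpoly N"
  shows "charpoly (M ** M) = charpoly (N ** N)"
proof (rule ccontr)
  assume ne: "charpoly (M ** M) \<noteq> charpoly (N ** N)"
  define d where "d = charpoly (M ** M) - charpoly (N ** N)"
  have d0: "d \<noteq> 0" using ne by (simp add: d_def)
  have "{0::real..} \<subseteq> {x. poly d x = 0}"
  proof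
    fix s :: real assume "s \<in> {0..}"
    then have "s = sqrt s * sqrt s" by simp
    then have "poly d s = poly d (sqrt s * sqrt s)" by simp
    also have "\<dots> = poly (charpoly (M ** M)) (sqrt s * sqrt s) - poly (charpoly (N ** N)) (sqrt s * sqrt s)"
      by (simp only: d_def poly_diff)
    also have "\<dots> = 0" unfolding charpoly_sq_eval assms by simp
    finally show "s \<in> {x. poly d x = 0}" by simp
  qed
  moreover have "finite {x. poly d x = 0}" using d0 by (rule poly_roots_finite)
  ultimately have "finite {0::real..}" by (rule finite_subset)
  then show False using infinite_Ici by blast
qed

lemma sym_charpoly_eq:
  fixes M N :: "real^'n::finite^'n"
  assumes sM: "\<And>i j. M$i$j = M$j$i" and sN: "\<And>i j. N$i$j = N$j$i"
    and sp: "spectrum_mset M = spectrum_mset N"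
  shows "charpoly M = charpoly N"
proof -
  have "charpoly M = smult (lead_coeff (charpoly M)) (\<Prod>r\<in>#proots (charpoly M). [:-r,1:])"
    by (rule real_split) (use charpoly_props(2)[of M] sym_real_roots[OF sM] in auto)
  moreover have "charpoly N = smult (lead_coeff (charpoly N)) (\<Prod>r\<in>#proots (charpoly N). [:-r,1:])"
    by (rule real_split) (use charpoly_props(2)[of N] sym_real_roots[OF sN] in auto)
  ultimately show ?thesis using sp charpoly_props(2)[of M] charpoly_props(2)[of N]
    by (simp add: spectrum_mset_def)
qed

lemma sym_inner:
  fixes M :: "real^'n::finite^'n"
  assumes sM: "\<And>i j. M$i$j = M$j$i"
  shows "y \<bullet> (M *v h) = h \<bullet> (M *v y)"
proof -
  have "y \<bullet> (M *v h) = (\<Sum>i\<in>UNIV. \<Sum>j\<in>UNIV. y$i * M$i$j * h$j)"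
    by (simp add: inner_vec_def matrix_vector_mult_def sum_distrib_left mult_ac)
  also have "\<dots> = (\<Sum>j\<in>UNIV. \<Sum>i\<in>UNIV. y$i * M$i$j * h$j)" by (rule sum.swap)
  also have "\<dots> = h \<bullet> (M *v y)"
    by (simp add: inner_vec_def matrix_vector_mult_def sum_distrib_left mult_ac sM)
  finally show ?thesis .
qed

lemma quad_zero:
  fixes a b :: real
  assumes "\<And>t. 2*t*b + t^2*a \<le> 0"
  shows "b = 0"
proof (rule ccontr)
  assume b: "b \<noteq> 0"
  define c where "c = 1 / (\<bar>a\<bar> + 1)"
  have c0: "c > 0" unfolding c_def by simp
  have ca: "c * \<bar>a\<bar> < 1" unfolding c_def by (simp add: field_simps)
  define t where "t = c * b"
  have "2*t*b + t^2*a = c * b^2 * (2 + c * a)" unfolding t_def by (simp add: power2_eq_square algebra_simps)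
  moreover have "2 + c * a > 0" using ca c0 by (smt (verit) mult_left_mono abs_ge_self abs_ge_minus_self mult_minus_right)
  moreover have "c * b^2 > 0" using c0 b by simp
  ultimately have "2*t*b + t^2*a > 0" by simp
  then show False using assms[of t] by simp
qed

lemma mv_scale: "(M::real^'n::finite^'m) *v (t *\<^sub>R h) = t *\<^sub>R (M *v h)"
  by (simp add: vec_eq_iff matrix_vector_mult_def sum_distrib_left mult_ac)

lemma max_eig:
  fixes M :: "real^'n::finite^'n"
  assumes sM: "\<And>i j. M$i$j = M$j$i"
    and le: "\<And>x. x \<bullet> (M *v x) \<le> \<mu> * (x \<bullet> x)"
    and eq: "y \<bullet> (M *v y) = \<mu> * (y \<bullet> y)"
  shows "M *v y = \<mu> *\<^sub>R y"
proof -
  define h where "h = M *v y - \<mu> *\<^sub>R y"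
  have "2*t*(h \<bullet> (M *v y) - \<mu> * (h \<bullet> y)) + t^2 * (h \<bullet> (M *v h) - \<mu> * (h \<bullet> h)) \<le> 0" for t
  proof -
    have A1: "(y + t *\<^sub>R h) \<bullet> (M *v (y + t *\<^sub>R h)) \<le> \<mu> * ((y + t *\<^sub>R h) \<bullet> (y + t *\<^sub>R h))"
      by (rule le)
    have A2: "(y + t *\<^sub>R h) \<bullet> (M *v (y + t *\<^sub>R h)) =
       y \<bullet> (M *v y) + 2*t*(h \<bullet> (M *v y)) + t^2 * (h \<bullet> (M *v h))"
      using sym_inner[OF sM, of y h]
      by (simp add: matrix_vector_right_distrib mv_scale inner_add_left inner_add_right
          power2_eq_square algebra_simps del: scaleR_matrix_vector_assoc)
    have A3: "(y + t *\<^sub>R h) \<bullet> (y + t *\<^sub>R h) = y \<bullet> y + 2*t*(h \<bullet> y) + t^2*(h \<bullet> h)"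
      by (simp add: inner_add_left inner_add_right power2_eq_square algebra_simps inner_commute)
    note A1[unfolded A2 A3]
    moreover have "\<mu> * (y \<bullet> y + 2*t*(h \<bullet> y) + t^2*(h \<bullet> h)) = \<mu> * (y \<bullet> y) + 2*t*(\<mu> * (h \<bullet> y)) + t^2*(\<mu> * (h \<bullet> h))"
      by (simp add: algebra_simps)
    moreover have "2*t*(h \<bullet> (M *v y) - \<mu> * (h \<bullet> y)) + t^2 * (h \<bullet> (M *v h) - \<mu> * (h \<bullet> h))
       = 2*t*(h \<bullet> (M *v y)) + t^2 * (h \<bullet> (M *v h)) - (2*t*(\<mu> * (h \<bullet> y)) + t^2*(\<mu> * (h \<bullet> h)))"
      by (simp add: algebra_simps)
    ultimately show ?thesis using eq by linarith
  qed
  then have "h \<bullet> (M *v y) - \<mu> * (h \<bullet> y) = 0" by (rule quad_zero)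
  then have "h \<bullet> h = 0" unfolding h_def by (simp add: inner_diff_right algebra_simps)
  then show ?thesis unfolding h_def by simp
qed

lemma mat_mv: "(mat c :: real^'n::finite^'n) *v y = c *\<^sub>R y"
proof -
  have "((mat c :: real^'n::finite^'n) *v y) $ i = c * y $ i" for i
  proof -
    have "(\<Sum>j\<in>UNIV. (if i = j then c else 0) * y$j) = (\<Sum>j\<in>UNIV. (if i = j then c * y$j else 0))"
      by (rule sum.cong) auto
    then show ?thesis by (simp add: matrix_vector_mult_def mat_def)
  qed
  then show ?thesis by (simp add: vec_eq_iff)
qed

lemma eig_root:
  fixes M :: "real^'n::finite^'n"
  assumes "M *v y = \<mu> *\<^sub>R y" "y \<noteq> 0"
  shows "poly (charpoly M) \<mu> = 0"
proof (rule ccontr)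
  assume "poly (charpoly M) \<mu> \<noteq> 0"
  then have "det (mat \<mu> - M) \<noteq> 0" by (simp add: poly_charpoly)
  then have "invertible (mat \<mu> - M)" using invertible_det_nz by blast
  then obtain B where "B ** (mat \<mu> - M) = mat 1" using invertible_left_inverse by blast
  then have "\<forall>x. (mat \<mu> - M) *v x = 0 \<longrightarrow> x = 0" using matrix_left_invertible_ker by blast
  moreover have "(mat \<mu> - M) *v y = 0" using assms(1) by (simp add: matrix_vector_mult_diff_rdistrib mat_mv)
  ultimately show False using assms(2) by blast
qed

lemma root_eig:
  fixes N :: "real^'n::finite^'n"
  assumes "poly (charpoly N) r = 0"
  shows "\<exists>x. x \<noteq> 0 \<and> N *v x = r *\<^sub>R x"
proof -
  have "det (mat r - N) = 0" using assms by (simp add: poly_charpoly)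
  then obtain x where "x \<noteq> 0" "(mat r - N) *v x = 0" using det0_ker by blast
  then show ?thesis by (intro exI[of _ x]) (simp add: matrix_vector_mult_diff_rdistrib mat_mv)
qed

lemma nsd:
  fixes M :: "real^'n::finite^'n"
  assumes sM: "\<And>i j. M$i$j = M$j$i"
    and roots: "\<And>r. poly (charpoly M) r = 0 \<Longrightarrow> r \<le> 0"
  shows "x \<bullet> (M *v x) \<le> 0"
proof -
  define f where "f = (\<lambda>y::real^'n. y \<bullet> (M *v y))"
  have cont: "continuous_on (sphere 0 1) f" unfolding f_def
    by (intro continuous_intros linear_continuous_on) (simp add: bounded_linear_def matrix_vector_mul_linear)
  have "sphere (0::real^'n) 1 \<noteq> {}" by simp
  then obtain y0 where y0: "y0 \<in> sphere 0 1" and mx: "\<And>y. y \<in> sphere 0 1 \<Longrightarrow> f y \<le> f y0"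
    using continuous_attains_sup[OF compact_sphere _ cont] by blast
  define \<mu> where "\<mu> = f y0"
  have ny0: "y0 \<bullet> y0 = 1" using y0 by (simp add: dot_square_norm)
  have le: "x \<bullet> (M *v x) \<le> \<mu> * (x \<bullet> x)" for x
  proof (cases "x = 0")
    case True then show ?thesis by simp
  next
    case False
    define u where "u = (1 / norm x) *\<^sub>R x"
    have "u \<in> sphere 0 1" using False by (simp add: u_def)
    then have fu: "f u \<le> \<mu>" using mx \<mu>_def by blast
    have xu: "x = norm x *\<^sub>R u" using False by (simp add: u_def)
    have "x \<bullet> (M *v x) = (norm x)^2 * f u"
      by (subst (1 2) xu) (simp add: f_def mv_scale power2_eq_square)
    also have "\<dots> \<le> (norm x)^2 * \<mu>" using fu by (simp add: mult_left_mono)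
    also have "\<dots> = \<mu> * (x \<bullet> x)" by (simp add: dot_square_norm)
    finally show ?thesis .
  qed
  have eq: "y0 \<bullet> (M *v y0) = \<mu> * (y0 \<bullet> y0)" using ny0 by (simp add: \<mu>_def f_def)
  have "M *v y0 = \<mu> *\<^sub>R y0" by (rule max_eig[OF sM le eq])
  moreover have "y0 \<noteq> 0" using y0 by auto
  ultimately have "poly (charpoly M) \<mu> = 0" by (rule eig_root)
  then have "\<mu> \<le> 0" by (rule roots)
  then have "\<mu> * (x \<bullet> x) \<le> 0" by (simp add: mult_nonpos_nonneg)
  then show ?thesis using le[of x] by linarith
qed

lemma card_insert_filter:
  assumes "finite F" "a \<notin> F"
  shows "real (card {e\<in>insert a F. P e}) = real (card {e\<in>F. P e}) + (if P a then 1 else 0)"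
proof (cases "P a")
  case True
  then have "{e\<in>insert a F. P e} = insert a {e\<in>F. P e}" by auto
  then show ?thesis using assms True by simp
next
  case False
  then have "{e\<in>insert a F. P e} = {e\<in>F. P e}" by auto
  then show ?thesis using False by simp
qed

lemma edge_sum:
  fixes f :: "'v::finite \<Rightarrow> 'v \<Rightarrow> real"
  assumes "finite E"
  shows "(\<Sum>i\<in>UNIV. \<Sum>j\<in>UNIV. f i j * real (card {e\<in>E. src e = i \<and> tgt e = j}))
       = (\<Sum>e\<in>E. f (src e) (tgt e))"
  using assms
proof (induction E rule: finite_induct)
  case empty
  then show ?case by simp
next
  case (insert a F)
  have "(\<Sum>i\<in>UNIV. \<Sum>j\<in>UNIV. f i j * real (card {e\<in>insert a F. src e = i \<and> tgt e = j}))
     = (\<Sum>i\<in>UNIV. \<Sum>j\<in>UNIV. f i j * real (card {e\<in>F. src e = i \<and> tgt e = j})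
         + (if i = src a then (if j = tgt a then f i j else 0) else 0))"
    by (intro sum.cong refl) (simp only: card_insert_filter[OF insert.hyps(1,2)], auto simp: distrib_left)
  also have "\<dots> = (\<Sum>i\<in>UNIV. \<Sum>j\<in>UNIV. f i j * real (card {e\<in>F. src e = i \<and> tgt e = j}))
       + f (src a) (tgt a)"
  proof -
    have "(\<Sum>i\<in>UNIV. \<Sum>j\<in>UNIV. (if i = src a then (if j = tgt a then f i j else 0) else 0))
       = (\<Sum>i\<in>UNIV. (if i = src a then (\<Sum>j\<in>UNIV. if j = tgt a then f i j else 0) else 0))"
      by (rule sum.cong) auto
    then show ?thesis by (simp add: sum.distrib)
  qed
  also have "\<dots> = (\<Sum>e\<in>insert a F. f (src e) (tgt e))" using insert by simp
  finally show ?case .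
qed

lemma vertex_sum:
  fixes g :: "'v::finite \<Rightarrow> real"
  assumes "finite E"
  shows "(\<Sum>i\<in>UNIV. g i * real (card {e\<in>E. src e = i})) = (\<Sum>e\<in>E. g (src e))"
  using assms
proof (induction E rule: finite_induct)
  case empty
  then show ?case by simp
next
  case (insert a F)
  have "(\<Sum>i\<in>UNIV. g i * real (card {e\<in>insert a F. src e = i}))
     = (\<Sum>i\<in>UNIV. g i * real (card {e\<in>F. src e = i}) + (if i = src a then g i else 0))"
    by (intro sum.cong refl) (simp only: card_insert_filter[OF insert.hyps(1,2)], auto simp: distrib_left)
  also have "\<dots> = (\<Sum>i\<in>UNIV. g i * real (card {e\<in>F. src e = i})) + g (src a)"
    by (simp add: sum.distrib)
  also have "\<dots> = (\<Sum>e\<in>insert a F. g (src e))" using insert by simp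
  finally show ?case .
qed

lemma adj0_entry [simp]: "adj0 E src tgt $ i $ j = real (card {e\<in>E. src e = i \<and> tgt e = j})"
  by (simp add: adj0_def)

lemma mult_op_entry [simp]: "mult_op Q $ i $ j = (if i = j then Q i else 0)"
  by (simp add: mult_op_def)

lemma pg_facts:
  assumes "periodic_graph E src tgt rv tau"
  shows "finite E" "\<And>e. e \<in> E \<Longrightarrow> rv e \<in> E \<and> rv (rv e) = e \<and> src (rv e) = tgt e \<and> tgt (rv e) = src e"
  using assms unfolding periodic_graph_def by auto

lemma rv_bij:
  assumes "periodic_graph E src tgt rv tau"
  shows "bij_betw rv E E"
  using pg_facts(2)[OF assms] by (intro bij_betwI[where g=rv]) auto

lemma adj_sym:
  assumes "periodic_graph E src tgt rv tau"
  shows "adj0 E src tgt $ i $ j = adj0 E src tgt $ j $ i"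
proof -
  have "bij_betw rv {e\<in>E. src e = i \<and> tgt e = j} {e\<in>E. src e = j \<and> tgt e = i}"
    using pg_facts(2)[OF assms] by (intro bij_betwI[where g=rv]) auto
  then show ?thesis by (simp add: bij_betw_same_card)
qed

lemma tgt_sum:
  assumes "periodic_graph E src tgt rv tau"
  shows "(\<Sum>e\<in>E. g (tgt e)) = (\<Sum>e\<in>E. g (src e))"
proof -
  have "(\<Sum>e\<in>E. g (src (rv e))) = (\<Sum>e\<in>E. g (src e))"
    using sum.reindex_bij_betw[OF rv_bij[OF assms], of "\<lambda>e. g (src e)"] by simp
  moreover have "(\<Sum>e\<in>E. g (src (rv e))) = (\<Sum>e\<in>E. g (tgt e))"
    using pg_facts(2)[OF assms] by (intro sum.cong) auto
  ultimately show ?thesis by simp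
qed

lemma trace_sq: "trace (X ** X) = (\<Sum>i\<in>UNIV. \<Sum>k\<in>UNIV. X$i$k * X$k$i)"
  by (simp add: trace_def matrix_matrix_mult_def)

lemma part1:
  fixes E :: "'e set" and src tgt :: "'e \<Rightarrow> 'v::finite" and rv :: "'e \<Rightarrow> 'e"
    and tau :: "'e \<Rightarrow> ('d::finite \<Rightarrow> int)" and Q :: "'v \<Rightarrow> real"
  assumes pg: "periodic_graph E src tgt rv tau"
    and sp: "spectrum_mset (adj0 E src tgt + mult_op Q) = spectrum_mset (adj0 E src tgt)"
    and nl: "\<not> has_loop E src tgt"
  shows "Q = (\<lambda>v. 0)"
proof -
  define A where "A = adj0 E src tgt"
  define M where "M = A + mult_op Q"
  have sA: "A$i$j = A$j$i" for i j unfolding A_def by (rule adj_sym[OF pg])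
  have sM: "M$i$j = M$j$i" for i j unfolding M_def using sA by auto
  have diag: "A$i$i = 0" for i
  proof -
    have em: "{e\<in>E. src e = i \<and> tgt e = i} = {}" using nl unfolding has_loop_def by auto
    show ?thesis unfolding A_def adj0_entry em by simp
  qed
  have "charpoly M = charpoly A" using sym_charpoly_eq[OF sM sA] sp by (simp add: M_def A_def)
  then have "charpoly (M ** M) = charpoly (A ** A)" by (rule charpoly_sq_eq)
  then have "trace (M ** M) = trace (A ** A)" using charpoly_props(3)[of "M ** M"] charpoly_props(3)[of "A ** A"]
    by simp
  moreover have "trace (M ** M) = trace (A ** A) + (\<Sum>i\<in>UNIV. (Q i)^2)"
  proof -
    have "trace (M ** M) = (\<Sum>i\<in>UNIV. \<Sum>k\<in>UNIV. A$i$k * A$k$i + (if i = k then (Q i)^2 else 0))"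
      unfolding trace_sq by (intro sum.cong refl) (auto simp: M_def diag power2_eq_square algebra_simps)
    also have "\<dots> = trace (A ** A) + (\<Sum>i\<in>UNIV. (Q i)^2)"
      unfolding trace_sq by (simp add: sum.distrib)
    finally show ?thesis .
  qed
  ultimately have "(\<Sum>i\<in>UNIV. (Q i)^2) = 0" by simp
  then have "\<forall>i\<in>UNIV. (Q i)^2 = 0" by (subst (asm) sum_nonneg_eq_0_iff) auto
  then show ?thesis by auto
qed

lemma part2:
  fixes E :: "'e set" and src tgt :: "'e \<Rightarrow> 'v::finite" and rv :: "'e \<Rightarrow> 'e"
    and tau :: "'e \<Rightarrow> ('d::finite \<Rightarrow> int)" and Q :: "'v \<Rightarrow> real"
  assumes pg: "periodic_graph E src tgt rv tau"
    and sp: "spectrum_mset (adj0 E src tgt + mult_op Q)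
            = spectrum_mset (adj0 E src tgt - mult_op (degree E src))"
  shows "Q = (\<lambda>v. - degree E src v)"
proof -
  define A where "A = adj0 E src tgt"
  define \<kappa> where "\<kappa> = degree E src"
  define M where "M = A + mult_op Q"
  define N where "N = A - mult_op \<kappa>"
  have finE: "finite E" by (rule pg_facts(1)[OF pg])
  have sA: "A$i$j = A$j$i" for i j unfolding A_def by (rule adj_sym[OF pg])
  have sM: "M$i$j = M$j$i" for i j unfolding M_def using sA by auto
  have sN: "N$i$j = N$j$i" for i j unfolding N_def using sA by auto
  have cp: "charpoly M = charpoly N" using sym_charpoly_eq[OF sM sN] sp
    by (simp add: M_def N_def A_def \<kappa>_def)
  have "trace M = trace N" using charpoly_props(3)[of M] charpoly_props(3)[of N] cp by simp
  then have trQ: "(\<Sum>i\<in>UNIV. Q i) = - (\<Sum>i\<in>UNIV. \<kappa> i)"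
    by (simp add: trace_def M_def N_def sum.distrib sum_subtractf)
  have row: "(\<Sum>j\<in>UNIV. A$i$j) = \<kappa> i" for i
  proof -
    have "(\<Sum>i'\<in>UNIV. \<Sum>j\<in>UNIV. (if i' = i then 1 else 0) * A$i'$j) = (\<Sum>i'\<in>UNIV. if i' = i then (\<Sum>j\<in>UNIV. A$i'$j) else 0)"
      by (rule sum.cong) auto
    then have "(\<Sum>j\<in>UNIV. A$i$j) = (\<Sum>i'\<in>UNIV. \<Sum>j\<in>UNIV. (if i' = i then 1 else 0) * A$i'$j)"
      by simp
    also have "\<dots> = (\<Sum>e\<in>E. (if src e = i then 1 else 0))"
      unfolding A_def adj0_entry by (rule edge_sum[OF finE])
    also have "\<dots> = (\<Sum>i'\<in>UNIV. (if i' = i then 1 else 0) * real (card {e\<in>E. src e = i'}))"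
      by (rule vertex_sum[OF finE, symmetric])
    also have "\<dots> = (\<Sum>i'\<in>UNIV. if i' = i then real (card {e\<in>E. src e = i'}) else 0)"
      by (rule sum.cong) auto
    also have "\<dots> = \<kappa> i" by (simp add: \<kappa>_def degree_def)
    finally show ?thesis .
  qed
  have qN: "x \<bullet> (N *v x) \<le> 0" for x :: "real^'v"
  proof -
    have "x \<bullet> (A *v x) = (\<Sum>i\<in>UNIV. \<Sum>j\<in>UNIV. (x$i * x$j) * A$i$j)"
      by (simp add: inner_vec_def matrix_vector_mult_def sum_distrib_left mult_ac)
    also have "\<dots> = (\<Sum>e\<in>E. x$(src e) * x$(tgt e))"
      unfolding A_def adj0_entry by (rule edge_sum[OF finE])
    finally have q1: "x \<bullet> (A *v x) = (\<Sum>e\<in>E. x$(src e) * x$(tgt e))" .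
    have "x \<bullet> (mult_op \<kappa> *v x) = (\<Sum>i\<in>UNIV. (x$i)^2 * real (card {e\<in>E. src e = i}))"
    proof -
      have "(mult_op \<kappa> *v x) $ i = \<kappa> i * x$i" for i
      proof -
        have "(\<Sum>j\<in>UNIV. (if i = j then \<kappa> i else 0) * x$j) = (\<Sum>j\<in>UNIV. if i = j then \<kappa> i * x$j else 0)"
          by (rule sum.cong) auto
        then show ?thesis by (simp add: matrix_vector_mult_def)
      qed
      then show ?thesis by (simp add: inner_vec_def \<kappa>_def degree_def power2_eq_square mult_ac)
    qed
    also have "\<dots> = (\<Sum>e\<in>E. (x$(src e))^2)" by (rule vertex_sum[OF finE])
    finally have q2: "x \<bullet> (mult_op \<kappa> *v x) = (\<Sum>e\<in>E. (x$(src e))^2)" .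
    have q3: "(\<Sum>e\<in>E. (x$(tgt e))^2) = (\<Sum>e\<in>E. (x$(src e))^2)"
      by (rule tgt_sum[OF pg])
    have "2 * (\<Sum>e\<in>E. x$(src e) * x$(tgt e)) \<le> (\<Sum>e\<in>E. (x$(src e))^2) + (\<Sum>e\<in>E. (x$(tgt e))^2)"
    proof -
      have "(\<Sum>e\<in>E. 2 * (x$(src e) * x$(tgt e))) \<le> (\<Sum>e\<in>E. (x$(src e))^2 + (x$(tgt e))^2)"
        by (rule sum_mono) (metis sum_squares_bound mult.assoc)
      then show ?thesis by (simp add: sum_distrib_left sum.distrib)
    qed
    then have "x \<bullet> (A *v x) \<le> x \<bullet> (mult_op \<kappa> *v x)" using q1 q2 q3 by linarith
    then show ?thesis unfolding N_def by (simp add: matrix_vector_mult_diff_rdistrib inner_diff_right)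
  qed
  have roots: "r \<le> 0" if "poly (charpoly M) r = 0" for r
  proof -
    have "poly (charpoly N) r = 0" using that cp by simp
    then obtain x where x0: "x \<noteq> 0" and ev: "N *v x = r *\<^sub>R x" using root_eig by blast
    have "x \<bullet> (N *v x) = r * (x \<bullet> x)" using ev by simp
    moreover have "x \<bullet> x > 0" using x0 by simp
    ultimately show ?thesis using qN[of x] by (smt (verit) mult_pos_pos)
  qed
  have qM: "x \<bullet> (M *v x) \<le> 0 * (x \<bullet> x)" for x using nsd[OF sM roots] by simp
  define one :: "real^'v" where "one = (\<chi> i. 1)"
  have "one \<bullet> (M *v one) = (\<Sum>i\<in>UNIV. \<Sum>j\<in>UNIV. M$i$j)"
    by (simp add: one_def inner_vec_def matrix_vector_mult_def)
  also have "\<dots> = (\<Sum>i\<in>UNIV. \<kappa> i + Q i)"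
  proof (rule sum.cong[OF refl])
    fix i
    have "(\<Sum>j\<in>UNIV. M$i$j) = (\<Sum>j\<in>UNIV. A$i$j + (if i = j then Q i else 0))"
      by (simp add: M_def)
    also have "\<dots> = \<kappa> i + Q i" by (simp add: sum.distrib row)
    finally show "(\<Sum>j\<in>UNIV. M$i$j) = \<kappa> i + Q i" .
  qed
  also have "\<dots> = 0" using trQ by (simp add: sum.distrib)
  finally have "one \<bullet> (M *v one) = 0 * (one \<bullet> one)" by simp
  then have "M *v one = 0 *\<^sub>R one" by (rule max_eig[OF sM qM])
  then have "(M *v one) $ i = 0" for i by simp
  then have "\<kappa> i + Q i = 0" for i
  proof -
    have "(M *v one) $ i = (\<Sum>j\<in>UNIV. A$i$j + (if i = j then Q i else 0))"
      by (simp add: M_def one_def matrix_vector_mult_def)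
    also have "\<dots> = \<kappa> i + Q i" by (simp add: sum.distrib row)
    finally show ?thesis using \<open>\<And>i. (M *v one) $ i = 0\<close> by simp
  qed
  then show ?thesis by (auto simp: \<kappa>_def fun_eq_iff add_eq_0_iff)
qed

theorem proposition2p13:
  fixes E :: "'e set" and src tgt :: "'e \<Rightarrow> 'v::finite" and rv :: "'e \<Rightarrow> 'e"
    and tau :: "'e \<Rightarrow> ('d::finite \<Rightarrow> int)" and Q :: "'v \<Rightarrow> real"
  assumes "periodic_graph E src tgt rv tau"
  shows "(spectrum_mset (adj0 E src tgt + mult_op Q) = spectrum_mset (adj0 E src tgt)
            \<and> \<not> has_loop E src tgt \<longrightarrow> Q = (\<lambda>v. 0))
       \<and> (spectrum_mset (adj0 E src tgt + mult_op Q)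
            = spectrum_mset (adj0 E src tgt - mult_op (degree E src))
            \<longrightarrow> Q = (\<lambda>v. - degree E src v))"
  using part1[OF assms, of Q] part2[OF assms, of Q] by blast

end
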